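(* Let $A\in\mathbb{R}^{m\times n}$, $y\in\mathbb{R}^m$, $\lambda>0$, and let $x^\star$ be a global minimizer of $$\min_{x\in\mathbb{R}^n}\ \frac{1}{2\lambda}\|Ax-y\|^2+\sum_{i=1}^{N} w_i\|x_{G_i}\|.$$ Let $\beta^\star=-\frac{1}{\lambda}A^\top(Ax^\star-y)$. Then for every $t\in\{1,\dots,N\}$: if $\|\beta^\star_{G_t}\|<w_t$, then $x^\star_{G_t}=0$.
   Context: Let $n,N\in\mathbb{N}$ and let $G_1,\dots,G_N\subseteq\{1,\dots,n\}$ be nonempty index sets (groups), possibly overlapping, with $\bigcup_{i=1}^N G_i=\{1,\dots,n\}$, and let $w_1,\dots,w_N>0$ be weights. For $x\in\mathbb{R}^n$ and $G\subseteq\{1,\dots,n\}$, $x_G\in\mathbb{R}^{|G|}$ denotes the subvector of $x$ with entries indexed by $G$ (in increasing index order). All norms are Euclidean. The vector $\beta^\star$ is called the LASSO certificate. *)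

theory Defs
  imports "HOL-Analysis.Analysis"
begin

definition subvec_norm :: "'n::finite set \<Rightarrow> real^'n \<Rightarrow> real" where
  "subvec_norm G x = sqrt (\<Sum>j\<in>G. (x $ j)^2)"

definition group_lasso_obj ::
  "real^'n::finite^'m::finite \<Rightarrow> real^'m \<Rightarrow> real \<Rightarrow> nat \<Rightarrow> (nat \<Rightarrow> 'n set) \<Rightarrow> (nat \<Rightarrow> real)
   \<Rightarrow> real^'n \<Rightarrow> real" where
  "group_lasso_obj A y lam N G w x =
     (1 / (2 * lam)) * (norm (A *v x - y))^2 + (\<Sum>i=1..N. w i * subvec_norm (G i) x)"

end

theory Submission
  imports Defs
begin

lemma subvec_norm_L2: "subvec_norm G x = L2_set (\<lambda>j. x $ j) G"
  by (simp add: subvec_norm_def L2_set_def)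

theorem proposition3p5:
  fixes A :: "real^'n::finite^'m::finite" and y :: "real^'m"
    and lam :: real and N :: nat and G :: "nat \<Rightarrow> 'n set" and w :: "nat \<Rightarrow> real"
    and xs :: "real^'n" and t :: nat
  assumes groups_nonempty: "\<forall>i\<in>{1..N}. G i \<noteq> {}"
    and groups_cover: "(\<Union>i\<in>{1..N}. G i) = UNIV"
    and weights_pos: "\<forall>i\<in>{1..N}. w i > 0"
    and lam_pos: "lam > 0"
    and minimizer: "\<forall>x. group_lasso_obj A y lam N G w xs \<le> group_lasso_obj A y lam N G w x"
    and t_range: "t \<in> {1..N}"
    and small: "subvec_norm (G t) (- (1 / lam) *\<^sub>R (transpose A *v (A *v xs - y))) < w t"
  shows "\<forall>j\<in>G t. xs $ j = 0"
proof (rule ccontr)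
  assume "\<not> (\<forall>j\<in>G t. xs $ j = 0)"
  then obtain j0 where j0: "j0 \<in> G t" "xs $ j0 \<noteq> 0" by blast
  define r where "r = A *v xs - y"
  define beta where "beta = - (1 / lam) *\<^sub>R (transpose A *v r)"
  define c where "c = subvec_norm (G t) xs"
  define b where "b = subvec_norm (G t) beta"
  define d :: "real^'n" where "d = (\<chi> j. if j \<in> G t then - xs $ j else 0)"
  define z where "z = (\<lambda>s::real. xs + s *\<^sub>R d)"
  define K where "K = (norm (A *v d))^2 / (2 * lam)"
  define P where "P = (\<lambda>x. \<Sum>i=1..N. w i * subvec_norm (G i) x)"
  have bw: "b < w t" using small by (simp add: b_def beta_def r_def)
  have b0: "b \<ge> 0" by (simp add: b_def subvec_norm_def sum_nonneg)
  have K0: "K \<ge> 0" using lam_pos by (simp add: K_def)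
  have zc: "z s $ k = (if k \<in> G t then (1 - s) * xs $ k else xs $ k)" for s k
    by (simp add: z_def d_def algebra_simps)
  have c0: "c > 0"
  proof -
    have "(xs $ j0)^2 \<le> (\<Sum>j\<in>G t. (xs $ j)^2)"
      using j0 by (intro member_le_sum) auto
    moreover have "(xs $ j0)^2 > 0" using j0 by simp
    ultimately have "(\<Sum>j\<in>G t. (xs $ j)^2) > 0" by linarith
    then show ?thesis by (simp add: c_def subvec_norm_def)
  qed
  have pen_le: "subvec_norm (G i) (z s) \<le> subvec_norm (G i) xs" if s: "0 \<le> s" "s \<le> 1" for i s
  proof -
    have "(z s $ k)^2 \<le> (xs $ k)^2" for k
    proof -
      have "(1 - s)^2 \<le> 1" using s by (simp add: power_le_one)
      then have "((1 - s) * xs $ k)^2 \<le> (xs $ k)^2"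
        by (simp add: power_mult_distrib mult_left_le_one_le)
      then show ?thesis by (simp add: zc)
    qed
    then show ?thesis unfolding subvec_norm_def
      by (intro real_sqrt_le_mono sum_mono) auto
  qed
  have pen_t: "subvec_norm (G t) (z s) = (1 - s) * c" if s: "s \<le> 1" for s
  proof -
    have "(\<Sum>j\<in>G t. (z s $ j)^2) = (1 - s)^2 * (\<Sum>j\<in>G t. (xs $ j)^2)"
      by (simp add: zc sum_distrib_left power_mult_distrib)
    then show ?thesis using s by (simp add: subvec_norm_def c_def real_sqrt_mult)
  qed
  have Pz: "P (z s) \<le> P xs - s * w t * c" if s: "0 \<le> s" "s \<le> 1" for s
  proof -
    have fin: "finite {1..N}" by simp
    have "P (z s) = w t * subvec_norm (G t) (z s) + (\<Sum>i\<in>{1..N} - {t}. w i * subvec_norm (G i) (z s))"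
      unfolding P_def using sum.remove[OF fin t_range] by simp
    also have "\<dots> \<le> w t * ((1 - s) * c) + (\<Sum>i\<in>{1..N} - {t}. w i * subvec_norm (G i) xs)"
      using pen_t[OF s(2)] pen_le[OF s] weights_pos t_range
      by (intro add_mono sum_mono mult_left_mono) (auto simp: less_imp_le)
    also have "\<dots> = P xs - s * w t * c"
      unfolding P_def using sum.remove[OF fin t_range, of "\<lambda>i. w i * subvec_norm (G i) xs"]
      by (simp add: c_def algebra_simps)
    finally show ?thesis .
  qed
  have inner_bd: "- inner beta d \<le> b * c"
  proof -
    have "inner beta d = (\<Sum>j\<in>UNIV. beta $ j * d $ j)" by (simp add: inner_vec_def)
    also have "\<dots> = (\<Sum>j\<in>G t. - (beta $ j * xs $ j))"
      by (simp add: d_def if_distrib sum.If_cases)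
    finally have "- inner beta d = (\<Sum>j\<in>G t. beta $ j * xs $ j)"
      by (simp add: sum_negf)
    also have "\<dots> \<le> (\<Sum>j\<in>G t. \<bar>beta $ j\<bar> * \<bar>xs $ j\<bar>)"
      by (intro sum_mono) (metis abs_ge_self abs_mult)
    also have "\<dots> \<le> b * c" unfolding b_def c_def subvec_norm_L2 by (rule L2_set_mult_ineq)
    finally show ?thesis .
  qed
  have smooth: "(1 / (2 * lam)) * (norm (A *v z s - y))^2
      = (1 / (2 * lam)) * (norm r)^2 - s * inner beta d + s^2 * K" for s
  proof -
    have e1: "A *v z s - y = r + s *\<^sub>R (A *v d)"
      by (simp add: z_def r_def matrix_vector_right_distrib matrix_vector_mult_scaleR algebra_simps)
    have e2: "inner r (A *v d) = - lam * inner beta d"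
      using lam_pos by (simp add: beta_def dot_lmul_matrix)
    have "(norm (r + s *\<^sub>R (A *v d)))^2 = (norm r)^2 + 2 * s * inner r (A *v d) + s^2 * (norm (A *v d))^2"
      unfolding power2_norm_eq_inner inner_add_left inner_add_right inner_scaleR_left inner_scaleR_right inner_commute[of "A *v d" r]
      by (simp add: algebra_simps power2_eq_square)
    then show ?thesis using lam_pos unfolding e1 e2 K_def
      by (simp add: field_simps power2_eq_square)
  qed
  have obj: "group_lasso_obj A y lam N G w (z s) \<le> group_lasso_obj A y lam N G w xs + s * ((b - w t) * c + s * K)"
    if s: "0 \<le> s" "s \<le> 1" for s
  proof -
    have "group_lasso_obj A y lam N G w (z s) = (1 / (2 * lam)) * (norm r)^2 - s * inner beta d + s^2 * K + P (z s)"
      unfolding group_lasso_obj_def P_def smooth by simp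
    also have "\<dots> \<le> (1 / (2 * lam)) * (norm r)^2 + s * (b * c) + s^2 * K + (P xs - s * w t * c)"
      using Pz[OF s] inner_bd s mult_left_mono[OF inner_bd s(1)] by simp
    also have "\<dots> = group_lasso_obj A y lam N G w xs + s * ((b - w t) * c + s * K)"
      unfolding group_lasso_obj_def P_def r_def by (simp add: algebra_simps power2_eq_square)
    finally show ?thesis .
  qed
  define s where "s = min 1 ((w t - b) * c / (K + 1))"
  have pos: "(w t - b) * c > 0" using bw c0 by simp
  have s0: "s > 0" "s \<le> 1" using pos K0 by (auto simp: s_def)
  have "s * K \<le> (w t - b) * c / (K + 1) * K"
    using K0 by (intro mult_right_mono) (auto simp: s_def)
  also have "\<dots> < (w t - b) * c"
    using pos K0 by (simp add: field_simps)
  finally have "(b - w t) * c + s * K < 0" by (simp add: algebra_simps)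
  then have "s * ((b - w t) * c + s * K) < 0" using s0 by (simp add: mult_pos_neg)
  moreover have "group_lasso_obj A y lam N G w (z s) \<le> group_lasso_obj A y lam N G w xs + s * ((b - w t) * c + s * K)"
    using obj[of s] s0 by simp
  moreover have "group_lasso_obj A y lam N G w xs \<le> group_lasso_obj A y lam N G w (z s)"
    using minimizer by blast
  ultimately show False by linarith
qed

end
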